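(* Let $m\ge 2$, $\Delta_{m-1}=\{\alpha\in\mathbb{R}^m:\alpha_i\ge 0,\ \sum_i\alpha_i=1\}$, and for each $\alpha\in\Delta_{m-1}$ let $\mathcal{J}_\alpha(x,y)$ be a loss differentiable in the input $x\in\mathbb{R}^d$ with gradient $g_\alpha(x,y)=\nabla_x\mathcal{J}_\alpha(x,y)$; for $i=1,\dots,m$ let $g_i(x,y)\in\mathbb{R}^d$ be the input gradient of the single-tool model $i$. Let $\rho_g=\max\{0,\sup_{i\neq j}\sup_{(x,y)}\cos(g_i(x,y),g_j(x,y))\}$. Assume: (i) (local smoothness) there is $\beta>0$ such that for all $\alpha$, $(x,y)$ and all $\delta\in\mathbb{R}^d$, $\mathcal{J}_\alpha(x+\delta,y)\le\mathcal{J}_\alpha(x,y)+\langle g_\alpha(x,y),\delta\rangle+\frac{\beta}{2}\|\delta\|_2^2$; (ii) (bounded gradients) there is $G>0$ with $\|g_i(x,y)\|_2\le G$ for all $i$, $(x,y)$; (iii) (linear aggregation) $g_\alpha=\sum_i\alpha_ig_i+\xi_\alpha$ with $\|\xi_\alpha(x,y)\|_2\le\delta_g$ for all $\alpha$, $(x,y)$; and assume the tool gradients are not perfectly aligned, $\rho_g<1$. Let $\varepsilon>0$ and define the robustness radius $R_\varepsilon(x,y;\alpha)=\sup\{z\ge 0:\forall\delta,\ \|\delta\|_2\le z\Rightarrow \mathcal{J}_\alpha(x+\delta,y)\le\mathcal{J}_\alpha(x,y)+\varepsilon\}$. Let $B(\alpha)=G\sqrt{\rho_g+(1-\rho_g)\|\alpha\|_2^2}+\delta_g$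 (an upper bound on $\|g_\alpha(x,y)\|_2$) and $r(\alpha)=\big(\sqrt{B(\alpha)^2+2\beta\varepsilon}-B(\alpha)\big)/\beta$. Then: $B(\alpha)$ is strictly increasing in $\|\alpha\|_2^2$, so a softer composition (smaller $\|\alpha\|_2^2$) strictly decreases the upper bound on $\|g_\alpha(x,y)\|_2$; and $r(\alpha)$ is a lower bound on $R_\varepsilon(x,y;\alpha)$ for all $(x,y)$, with $r(\alpha)>r(e_j)$ for every non-one-hot $\alpha\in\Delta_{m-1}$ (i.e. $\|\alpha\|_2^2<1$) and every hard selection $e_j$ (a standard basis vector, $\|e_j\|_2^2=1$).
   Context: Setting: a base LLM with parameters $\theta$ and $m$ tools, tool $i$ represented by a parameter increment $\Delta\theta_i$; $\mathcal{J}_\alpha$ is the loss of the model with parameters $\theta+\sum_i\alpha_i\Delta\theta_i$ on input context $x$ and target action $y$, and $g_i$ the input gradient of the loss with parameters $\theta+\Delta\theta_i$. A "hard selection" is a one-hot weight vector; a "soft composition" is any other weight vector in the simplex. *)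

theory Defs
  imports "HOL-Analysis.Analysis"
begin

definition prob_simplex :: "(real ^ 'm::finite) set" where
  "prob_simplex = {\<alpha>. (\<forall>i. 0 \<le> \<alpha> $ i) \<and> (\<Sum>i\<in>UNIV. \<alpha> $ i) = 1}"

text \<open>Cosine similarity (with HOL's convention x / 0 = 0 for zero vectors).\<close>
definition vcos :: "'x::real_inner \<Rightarrow> 'x \<Rightarrow> real" where
  "vcos u v = (u \<bullet> v) / (norm u * norm v)"

definition rho_g :: "('m \<Rightarrow> 'x::real_inner \<Rightarrow> 'y \<Rightarrow> 'x) \<Rightarrow> real" where
  "rho_g g = max 0 (Sup {vcos (g i x y) (g j x y) | i j x y. i \<noteq> j})"

text \<open>Robustness radius, valued in the extended reals (it may be infinite).\<close>
definition robust_radius :: "('x::real_normed_vector \<Rightarrow> 'y \<Rightarrow> real) \<Rightarrow> real \<Rightarrow> 'x \<Rightarrow> 'y \<Rightarrow> ereal" where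
  "robust_radius Jal \<epsilon> x y =
     Sup (ereal ` {z. 0 \<le> z \<and> (\<forall>\<delta>. norm \<delta> \<le> z \<longrightarrow> Jal (x + \<delta>) y \<le> Jal x y + \<epsilon>)})"

definition Bbound :: "real \<Rightarrow> real \<Rightarrow> real \<Rightarrow> real ^ 'm::finite \<Rightarrow> real" where
  "Bbound G \<rho> \<delta>g \<alpha> = G * sqrt (\<rho> + (1 - \<rho>) * (norm \<alpha>)\<^sup>2) + \<delta>g"

definition rbound :: "real \<Rightarrow> real \<Rightarrow> real \<Rightarrow> real \<Rightarrow> real \<Rightarrow> real ^ 'm::finite \<Rightarrow> real" where
  "rbound G \<rho> \<delta>g \<beta> \<epsilon> \<alpha> =
     (sqrt ((Bbound G \<rho> \<delta>g \<alpha>)\<^sup>2 + 2 * \<beta> * \<epsilon>) - Bbound G \<rho> \<delta>g \<alpha>) / \<beta>"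

end

theory Submission
  imports Defs
begin

lemma normsq_vec: "(norm (a::real^'m))\<^sup>2 = (\<Sum>i\<in>UNIV. (a$i)^2)"
proof -
  have "(norm a)\<^sup>2 = a \<bullet> a" by (rule power2_norm_eq_inner)
  also have "\<dots> = (\<Sum>i\<in>UNIV. (a$i)^2)" by (simp add: inner_vec_def power2_eq_square)
  finally show ?thesis .
qed

lemma sum_bound:
  fixes g :: "'m::finite \<Rightarrow> 'x::real_inner" and a :: "real^'m"
  assumes a0: "\<forall>i. 0 \<le> a$i" and a1: "(\<Sum>i\<in>UNIV. a$i) = 1"
    and gn: "\<And>i. norm (g i) \<le> G"
    and gc: "\<And>i j. i \<noteq> j \<Longrightarrow> g i \<bullet> g j \<le> \<rho> * (norm (g i) * norm (g j))"
    and r0: "0 \<le> \<rho>" and r1: "\<rho> \<le> 1"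
  shows "(norm (\<Sum>i\<in>UNIV. a$i *\<^sub>R g i))\<^sup>2 \<le> G\<^sup>2 * (\<rho> + (1 - \<rho>) * (norm a)\<^sup>2)"
proof -
  have G0: "0 \<le> G" using gn[of undefined] norm_ge_zero order_trans by blast
  have "(norm (\<Sum>i\<in>UNIV. a$i *\<^sub>R g i))\<^sup>2 = (\<Sum>i\<in>UNIV. \<Sum>j\<in>UNIV. a$i * a$j * (g j \<bullet> g i))"
    by (simp add: power2_norm_eq_inner inner_sum_left inner_sum_right sum_distrib_left mult.assoc)
  also have "\<dots> = (\<Sum>i\<in>UNIV. \<Sum>j\<in>UNIV. a$i * a$j * (g i \<bullet> g j))"
    by (simp add: inner_commute)
  also have "\<dots> \<le> (\<Sum>i\<in>UNIV. \<Sum>j\<in>UNIV. a$i * a$j * (if i = j then G\<^sup>2 else \<rho> * G\<^sup>2))"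
  proof (intro sum_mono)
    fix i j
    have aij: "0 \<le> a$i * a$j" using a0 by simp
    show "a$i * a$j * (g i \<bullet> g j) \<le> a$i * a$j * (if i = j then G\<^sup>2 else \<rho> * G\<^sup>2)"
    proof (cases "i = j")
      case True
      have "g i \<bullet> g i \<le> G\<^sup>2" using gn[of i] norm_ge_zero
        by (metis power2_norm_eq_inner power_mono)
      then show ?thesis using True aij by (simp add: mult_left_mono)
    next
      case False
      have "norm (g i) * norm (g j) \<le> G * G" using gn norm_ge_zero by (meson mult_mono')
      hence "\<rho> * (norm (g i) * norm (g j)) \<le> \<rho> * G\<^sup>2" using r0 by (simp add: mult_left_mono power2_eq_square)
      then show ?thesis using False aij gc[OF False] by (simp add: mult_left_mono order_trans)
    qed
  qed
  also have "\<dots> = (\<Sum>i\<in>UNIV. \<Sum>j\<in>UNIV. \<rho> * G\<^sup>2 * (a$i * a$j) + (if i = j then (1-\<rho>) * G\<^sup>2 * (a$i)^2 else 0))"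
    by (intro sum.cong refl) (auto simp: algebra_simps power2_eq_square)
  also have "\<dots> = \<rho> * G\<^sup>2 * (\<Sum>i\<in>UNIV. \<Sum>j\<in>UNIV. a$i * a$j) + (1-\<rho>) * G\<^sup>2 * (\<Sum>i\<in>UNIV. (a$i)^2)"
    by (simp add: sum.distrib sum_distrib_left)
  also have "\<dots> = G\<^sup>2 * (\<rho> + (1 - \<rho>) * (norm a)\<^sup>2)"
    using a1 sum_product[symmetric, where f="\<lambda>i. a$i" and A=UNIV and g="\<lambda>i. a$i" and B=UNIV] by (simp add: normsq_vec algebra_simps)
  finally show ?thesis .
qed

lemma rdec:
  fixes B1 B2 c :: real assumes "B1 < B2" "c > 0"
  shows "sqrt (B2\<^sup>2 + c) - B2 < sqrt (B1\<^sup>2 + c) - B1"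
proof -
  have key: "sqrt (B\<^sup>2 + c) - B = c / (sqrt (B\<^sup>2 + c) + B)" and pos: "sqrt (B\<^sup>2 + c) + B > 0" for B
  proof -
    have "sqrt (B\<^sup>2 + c) > sqrt (B\<^sup>2)" using assms(2) by (simp add: real_sqrt_less_iff del: real_sqrt_abs)
    hence s: "sqrt (B\<^sup>2 + c) > \<bar>B\<bar>" by simp
    thus p: "sqrt (B\<^sup>2 + c) + B > 0" by linarith
    have "(sqrt (B\<^sup>2 + c) - B) * (sqrt (B\<^sup>2 + c) + B) = c"
      using assms(2) by (simp add: algebra_simps power2_eq_square[symmetric])
    thus "sqrt (B\<^sup>2 + c) - B = c / (sqrt (B\<^sup>2 + c) + B)" using p by (simp add: field_simps)
  qed
  have m: "sqrt (B1\<^sup>2 + c) + B1 < sqrt (B2\<^sup>2 + c) + B2"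
  proof -
    have "B1 + sqrt (B1\<^sup>2 + c) < B2 + sqrt (B2\<^sup>2 + c)"
    proof (cases "B1\<^sup>2 \<le> B2\<^sup>2")
      case True
      hence "sqrt (B1\<^sup>2 + c) \<le> sqrt (B2\<^sup>2 + c)" by simp
      then show ?thesis using assms(1) by linarith
    next
      case False
      hence "sqrt (B1\<^sup>2 + c) - sqrt (B2\<^sup>2 + c) < B2 - B1"
      proof -
        have "(sqrt (B1\<^sup>2 + c) - sqrt (B2\<^sup>2 + c)) * (sqrt (B1\<^sup>2 + c) + sqrt (B2\<^sup>2 + c)) = B1\<^sup>2 - B2\<^sup>2"
          using assms(2) by (simp add: algebra_simps power2_eq_square[symmetric] add_pos_nonneg)
        also have "\<dots> = (B1 - B2) * (B1 + B2)" by (simp add: algebra_simps power2_eq_square)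
        finally have e0: "(sqrt (B1\<^sup>2 + c) - sqrt (B2\<^sup>2 + c)) * (sqrt (B1\<^sup>2 + c) + sqrt (B2\<^sup>2 + c)) = (B1 - B2) * (B1 + B2)" .
        have "(B1 - B2) * (B1 + B2) = (B2 - B1) * (-(B1 + B2))" by algebra
        with e0 have e: "(sqrt (B1\<^sup>2 + c) - sqrt (B2\<^sup>2 + c)) * (sqrt (B1\<^sup>2 + c) + sqrt (B2\<^sup>2 + c)) = (B2 - B1) * (-(B1 + B2))" by simp
        have "-(B1+B2) < sqrt (B1\<^sup>2 + c) + sqrt (B2\<^sup>2 + c)" using pos[of B1] pos[of B2] by linarith
        hence "(B2 - B1) * (-(B1 + B2)) < (B2 - B1) * (sqrt (B1\<^sup>2 + c) + sqrt (B2\<^sup>2 + c))"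
          using assms(1) by simp
        with e have "(sqrt (B1\<^sup>2 + c) - sqrt (B2\<^sup>2 + c)) * (sqrt (B1\<^sup>2 + c) + sqrt (B2\<^sup>2 + c)) < (B2 - B1) * (sqrt (B1\<^sup>2 + c) + sqrt (B2\<^sup>2 + c))" by simp
        moreover have "sqrt (B1\<^sup>2 + c) + sqrt (B2\<^sup>2 + c) > 0"
        proof -
          have "sqrt (B1\<^sup>2 + c) > 0" "sqrt (B2\<^sup>2 + c) > 0" using assms(2) by (simp_all add: add_nonneg_pos)
          thus ?thesis by linarith
        qed
        ultimately show ?thesis by simp
      qed
      then show ?thesis by linarith
    qed
    thus ?thesis by simp
  qed
  show ?thesis unfolding key[of B1] key[of B2]
    using m pos[of B1] assms(2) by (simp add: frac_less2)
qed

theorem corollary3p7: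
  fixes J :: "real ^ 'm::finite \<Rightarrow> 'x::euclidean_space \<Rightarrow> 'y \<Rightarrow> real"
    and ga :: "real ^ 'm \<Rightarrow> 'x \<Rightarrow> 'y \<Rightarrow> 'x"
    and g :: "'m \<Rightarrow> 'x \<Rightarrow> 'y \<Rightarrow> 'x"
    and \<beta> G \<delta>g \<epsilon> :: real
  assumes m2: "CARD('m) \<ge> 2"
    and grad: "\<And>\<alpha> x y. \<alpha> \<in> prob_simplex \<Longrightarrow>
                 ((\<lambda>x'. J \<alpha> x' y) has_derivative (\<lambda>h. ga \<alpha> x y \<bullet> h)) (at x)"
    and beta_pos: "\<beta> > 0"
    and smooth: "\<And>\<alpha> x y \<delta>. \<alpha> \<in> prob_simplex \<Longrightarrow>
                 J \<alpha> (x + \<delta>) y \<le> J \<alpha> x y + ga \<alpha> x y \<bullet> \<delta> + \<beta> / 2 * (norm \<delta>)\<^sup>2"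
    and G_pos: "G > 0"
    and bounded: "\<And>i x y. norm (g i x y) \<le> G"
    and linagg: "\<And>\<alpha> x y. \<alpha> \<in> prob_simplex \<Longrightarrow>
                 norm (ga \<alpha> x y - (\<Sum>i\<in>UNIV. (\<alpha> $ i) *\<^sub>R g i x y)) \<le> \<delta>g"
    and rho_lt: "rho_g g < 1"
    and eps_pos: "\<epsilon> > 0"
  shows "(\<forall>\<alpha>\<in>prob_simplex. \<forall>x y. norm (ga \<alpha> x y) \<le> Bbound G (rho_g g) \<delta>g \<alpha>)
       \<and> (\<forall>\<alpha>\<in>(prob_simplex :: (real^'m) set). \<forall>\<alpha>'\<in>(prob_simplex :: (real^'m) set). (norm \<alpha>)\<^sup>2 < (norm \<alpha>')\<^sup>2 \<longrightarrow>
             Bbound G (rho_g g) \<delta>g \<alpha> < Bbound G (rho_g g) \<delta>g \<alpha>')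
       \<and> (\<forall>\<alpha>\<in>prob_simplex. \<forall>x y.
             ereal (rbound G (rho_g g) \<delta>g \<beta> \<epsilon> \<alpha>) \<le> robust_radius (J \<alpha>) \<epsilon> x y)
       \<and> (\<forall>\<alpha>\<in>(prob_simplex :: (real^'m) set). (norm \<alpha>)\<^sup>2 < 1 \<longrightarrow> (\<forall>j::'m.
             rbound G (rho_g g) \<delta>g \<beta> \<epsilon> \<alpha> > rbound G (rho_g g) \<delta>g \<beta> \<epsilon> (axis j 1)))"
proof -
  define \<rho> where "\<rho> = rho_g g"
  have r0: "0 \<le> \<rho>" unfolding \<rho>_def rho_g_def by simp
  have r1: "\<rho> < 1" using rho_lt \<rho>_def by simp
  have vc1: "vcos u v \<le> 1" for u v :: 'x
  proof (cases "norm u * norm v = 0")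
    case True then show ?thesis unfolding vcos_def by auto
  next
    case False
    hence "norm u * norm v > 0" by (simp add: zero_less_mult_iff)
    moreover have "u \<bullet> v \<le> norm u * norm v" by (rule norm_cauchy_schwarz)
    ultimately show ?thesis unfolding vcos_def by simp
  qed
  have cosb: "g i x y \<bullet> g j x y \<le> \<rho> * (norm (g i x y) * norm (g j x y))" if ij: "i \<noteq> j" for i j x y
  proof (cases "norm (g i x y) * norm (g j x y) = 0")
    case True
    hence "g i x y = 0 \<or> g j x y = 0" by simp
    then show ?thesis using True by auto
  next
    case False
    hence pp: "norm (g i x y) * norm (g j x y) > 0" by (simp add: zero_less_mult_iff)
    let ?S = "{vcos (g i x y) (g j x y) | i j x y. i \<noteq> j}"
    have "bdd_above ?S" using vc1 by (auto intro!: bdd_aboveI[where M=1])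
    moreover have "vcos (g i x y) (g j x y) \<in> ?S" using ij by blast
    ultimately have "vcos (g i x y) (g j x y) \<le> Sup ?S" by (rule cSup_upper[rotated])
    hence "vcos (g i x y) (g j x y) \<le> \<rho>" unfolding \<rho>_def rho_g_def by simp
    hence "vcos (g i x y) (g j x y) * (norm (g i x y) * norm (g j x y)) \<le> \<rho> * (norm (g i x y) * norm (g j x y))"
      using pp by (simp add: mult_right_mono)
    moreover have "vcos (g i x y) (g j x y) * (norm (g i x y) * norm (g j x y)) = g i x y \<bullet> g j x y"
      unfolding vcos_def using pp by (metis less_irrefl nonzero_eq_divide_eq)
    ultimately show ?thesis by simp
  qed
  have P1: "norm (ga \<alpha> x y) \<le> Bbound G \<rho> \<delta>g \<alpha>" if a: "\<alpha> \<in> prob_simplex" for \<alpha> x y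
  proof -
    have a0: "\<forall>i. 0 \<le> \<alpha>$i" and a1: "(\<Sum>i\<in>UNIV. \<alpha>$i) = 1" using a unfolding prob_simplex_def by auto
    have sq: "(norm (\<Sum>i\<in>UNIV. \<alpha>$i *\<^sub>R g i x y))\<^sup>2 \<le> G\<^sup>2 * (\<rho> + (1 - \<rho>) * (norm \<alpha>)\<^sup>2)"
      by (rule sum_bound[OF a0 a1 bounded cosb r0]) (use r1 in auto)
    have "norm (\<Sum>i\<in>UNIV. \<alpha>$i *\<^sub>R g i x y) = sqrt ((norm (\<Sum>i\<in>UNIV. \<alpha>$i *\<^sub>R g i x y))\<^sup>2)" by simp
    also have "\<dots> \<le> sqrt (G\<^sup>2 * (\<rho> + (1 - \<rho>) * (norm \<alpha>)\<^sup>2))" using sq by (rule real_sqrt_le_mono)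
    also have "\<dots> = G * sqrt (\<rho> + (1 - \<rho>) * (norm \<alpha>)\<^sup>2)" using G_pos by (simp add: real_sqrt_mult)
    finally have n1: "norm (\<Sum>i\<in>UNIV. \<alpha>$i *\<^sub>R g i x y) \<le> G * sqrt (\<rho> + (1 - \<rho>) * (norm \<alpha>)\<^sup>2)" .
    have "norm (ga \<alpha> x y) \<le> norm (\<Sum>i\<in>UNIV. \<alpha>$i *\<^sub>R g i x y) + norm (ga \<alpha> x y - (\<Sum>i\<in>UNIV. \<alpha>$i *\<^sub>R g i x y))"
      by (rule norm_triangle_sub)
    then show ?thesis using n1 linagg[OF a, of x y] unfolding Bbound_def by linarith
  qed
  have P2: "Bbound G \<rho> \<delta>g \<alpha> < Bbound G \<rho> \<delta>g \<alpha>'" if "(norm \<alpha>)\<^sup>2 < (norm \<alpha>')\<^sup>2" for \<alpha> \<alpha>' :: "real^'m"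
  proof -
    have "(1 - \<rho>) * (norm \<alpha>)\<^sup>2 < (1 - \<rho>) * (norm \<alpha>')\<^sup>2" using that r1 by simp
    hence "sqrt (\<rho> + (1 - \<rho>) * (norm \<alpha>)\<^sup>2) < sqrt (\<rho> + (1 - \<rho>) * (norm \<alpha>')\<^sup>2)" by simp
    thus ?thesis unfolding Bbound_def using G_pos by simp
  qed
  have P3: "ereal (rbound G \<rho> \<delta>g \<beta> \<epsilon> \<alpha>) \<le> robust_radius (J \<alpha>) \<epsilon> x y" if a: "\<alpha> \<in> prob_simplex" for \<alpha> x y
  proof -
    define B where "B = Bbound G \<rho> \<delta>g \<alpha>"
    define s where "s = sqrt (B\<^sup>2 + 2 * \<beta> * \<epsilon>)"
    define r where "r = rbound G \<rho> \<delta>g \<beta> \<epsilon> \<alpha>"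
    have nB: "norm (ga \<alpha> x y) \<le> B" using P1[OF a] B_def by simp
    hence B0: "0 \<le> B" using norm_ge_zero order_trans by blast
    have s2: "s\<^sup>2 = B\<^sup>2 + 2 * \<beta> * \<epsilon>" unfolding s_def using beta_pos eps_pos B0 by simp
    have sB: "B \<le> s" unfolding s_def using beta_pos eps_pos
      by (metis B0 le_add_same_cancel1 less_eq_real_def mult_pos_pos real_le_rsqrt zero_less_numeral)
    have rdef: "\<beta> * r = s - B" unfolding r_def rbound_def s_def B_def using beta_pos by simp
    have r0: "0 \<le> r" using rdef sB beta_pos by (metis diff_ge_0_iff_ge zero_le_mult_iff not_less)
    have req: "B * r + \<beta> / 2 * r\<^sup>2 = \<epsilon>"
    proof -
      have "\<beta> * (B * r + \<beta> / 2 * r\<^sup>2) = B * (\<beta> * r) + (\<beta> * r)\<^sup>2 / 2" by (simp add: power2_eq_square field_simps)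
      also have "\<dots> = B * (s - B) + (s - B)\<^sup>2 / 2" by (simp add: rdef)
      also have "\<dots> = (s\<^sup>2 - B\<^sup>2) / 2" by (simp add: power2_eq_square field_simps)
      also have "\<dots> = \<beta> * \<epsilon>" using s2 by simp
      finally show ?thesis using beta_pos by simp
    qed
    have "r \<in> {z. 0 \<le> z \<and> (\<forall>\<delta>. norm \<delta> \<le> z \<longrightarrow> J \<alpha> (x + \<delta>) y \<le> J \<alpha> x y + \<epsilon>)}"
    proof (intro CollectI conjI allI impI r0)
      fix \<delta> :: 'x assume nd: "norm \<delta> \<le> r"
      have "ga \<alpha> x y \<bullet> \<delta> \<le> norm (ga \<alpha> x y) * norm \<delta>" by (rule norm_cauchy_schwarz)
      also have "\<dots> \<le> B * norm \<delta>" using nB by (simp add: mult_right_mono)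
      also have "\<dots> \<le> B * r" using nd B0 by (simp add: mult_left_mono)
      finally have i1: "ga \<alpha> x y \<bullet> \<delta> \<le> B * r" .
      have "(norm \<delta>)\<^sup>2 \<le> r\<^sup>2" using nd by (simp add: power_mono)
      hence i2: "\<beta> / 2 * (norm \<delta>)\<^sup>2 \<le> \<beta> / 2 * r\<^sup>2" using beta_pos by simp
      show "J \<alpha> (x + \<delta>) y \<le> J \<alpha> x y + \<epsilon>" using smooth[OF a, of x \<delta> y] i1 i2 req by linarith
    qed
    hence "ereal r \<le> robust_radius (J \<alpha>) \<epsilon> x y" unfolding robust_radius_def
      by (intro Sup_upper imageI)
    thus ?thesis by (simp add: r_def)
  qed
  have P4: "rbound G \<rho> \<delta>g \<beta> \<epsilon> \<alpha> > rbound G \<rho> \<delta>g \<beta> \<epsilon> (axis j 1)"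
    if a: "\<alpha> \<in> prob_simplex" and n: "(norm \<alpha>)\<^sup>2 < 1" for \<alpha> :: "real^'m" and j :: 'm
  proof -
    have "norm (axis j (1::real)) = 1" by (rule norm_axis_1)
    hence "Bbound G \<rho> \<delta>g \<alpha> < Bbound G \<rho> \<delta>g (axis j 1)" using P2[of \<alpha> "axis j 1"] n by simp
    hence "sqrt ((Bbound G \<rho> \<delta>g (axis j 1))\<^sup>2 + 2 * \<beta> * \<epsilon>) - Bbound G \<rho> \<delta>g (axis j 1)
         < sqrt ((Bbound G \<rho> \<delta>g \<alpha>)\<^sup>2 + 2 * \<beta> * \<epsilon>) - Bbound G \<rho> \<delta>g \<alpha>"
      by (rule rdec) (use beta_pos eps_pos in simp)
    thus ?thesis unfolding rbound_def using beta_pos by (simp add: divide_strict_right_mono)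
  qed
  show ?thesis unfolding \<rho>_def[symmetric] using P1 P2 P3 P4 by blast
qed

end
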